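(* Let $p,q>0$ and let $Z$ be a random variable with the Beta density $\frac{\Gamma(p+q)}{\Gamma(p)\Gamma(q)}x^{p-1}(1-x)^{q-1}I_{(0,1)}(x)$. Then for every $\delta>0$, $$P(|Z-E[Z]|>\delta)\le4e^{c(p+q)},\qquad\text{where } c=\log\Big(1+\frac{\delta}{3+2\delta}\Big)-\frac{\delta}{3+2\delta}.$$ *)

theory Defs
  imports "HOL-Probability.Probability"
begin

definition beta_density :: "real \<Rightarrow> real \<Rightarrow> real \<Rightarrow> real" where
  "beta_density p q x =
     indicator {0<..<1} x * (Gamma (p + q) / (Gamma p * Gamma q))
       * x powr (p - 1) * (1 - x) powr (q - 1)"

end

theory Submission
  imports Defs
begin

lemma beta_density_nonneg:
  assumes "p > 0" "q > 0"
  shows "beta_density p q x \<ge> 0"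
  using assms unfolding beta_density_def by (auto intro!: mult_nonneg_nonneg)

lemma beta_density_mult_eq:
  assumes "p > 0" "q > 0"
  shows "beta_density p q x * (x ^ j * (1 - x) ^ k) =
         (1 / Beta p q) * (indicator {0..1} x *\<^sub>R (x powr (p + real j - 1) * (1 - x) powr (q + real k - 1)))"
proof (cases "0 < x \<and> x < 1")
  case True
  have a: "x powr (p - 1) * x ^ j = x powr (p + real j - 1)"
    using True by (simp add: powr_realpow[symmetric] powr_add[symmetric] diff_add_eq[symmetric] add.commute)
  have b: "(1 - x) powr (q - 1) * (1 - x) ^ k = (1 - x) powr (q + real k - 1)"
    using True by (simp add: powr_realpow[symmetric] powr_add[symmetric] diff_add_eq[symmetric] add.commute)
  show ?thesis using True
    unfolding beta_density_def Beta_def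
    by (simp add: a[symmetric] b[symmetric] indicator_def)
next
  case False
  then consider "x \<le> 0 \<or> x > 1" | "x = 1" by linarith
  then show ?thesis
  proof cases
    case 1 then show ?thesis unfolding beta_density_def by (auto simp: indicator_def)
  next
    case 2 then show ?thesis unfolding beta_density_def by (auto simp: indicator_def)
  qed
qed

lemma beta_moment:
  assumes "p > 0" "q > 0"
  shows "integrable lborel (\<lambda>x. beta_density p q x * (x ^ j * (1 - x) ^ k))"
    and "(\<integral>x. beta_density p q x * (x ^ j * (1 - x) ^ k) \<partial>lborel) = Beta (p + real j) (q + real k) / Beta p q"
proof -
  have pj: "p + real j > 0" and qk: "q + real k > 0" using assms by auto
  have si: "set_integrable lborel {0..1} (\<lambda>t. t powr (p + real j - 1) * (1 - t) powr (q + real k - 1))"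
    using integrable_Beta[OF pj qk] by simp
  have I: "integrable lborel (\<lambda>x. indicator {0..1} x *\<^sub>R (x powr (p + real j - 1) * (1 - x) powr (q + real k - 1)))"
    using si unfolding set_integrable_def .
  have V: "(\<integral>x. indicator {0..1} x *\<^sub>R (x powr (p + real j - 1) * (1 - x) powr (q + real k - 1)) \<partial>lborel) = Beta (p + real j) (q + real k)"
  proof -
    have "(LINT x : {0..1} | lborel. x powr (p + real j - 1) * (1 - x) powr (q + real k - 1)) = integral {0..1} (\<lambda>t. t powr (p + real j - 1) * (1 - t) powr (q + real k - 1))"
      using set_borel_integral_eq_integral(2)[OF si] .
    also have "\<dots> = Beta (p + real j) (q + real k)"
      using has_integral_Beta_real[OF pj qk] by (rule integral_unique)
    finally show ?thesis unfolding set_lebesgue_integral_def .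
  qed
  show "integrable lborel (\<lambda>x. beta_density p q x * (x ^ j * (1 - x) ^ k))"
    unfolding beta_density_mult_eq[OF assms] using I by (rule integrable_mult_right)
  show "(\<integral>x. beta_density p q x * (x ^ j * (1 - x) ^ k) \<partial>lborel) = Beta (p + real j) (q + real k) / Beta p q"
    unfolding beta_density_mult_eq[OF assms] integral_mult_right_zero V by simp
qed

lemma pos_not_nonpos_Int: "(x::real) > 0 \<Longrightarrow> x \<notin> \<int>\<^sub>\<le>\<^sub>0"
  by (auto elim!: nonpos_Ints_cases)

lemma Beta_real_pos': "a > 0 \<Longrightarrow> b > 0 \<Longrightarrow> Beta a (b::real) > 0"
  unfolding Beta_def by simp

lemma Beta_ratio_left:
  assumes "p > 0" "q > 0"
  shows "Beta (p + real j) q / Beta p q = (\<Prod>i<j. (p + real i) / (p + q + real i))"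
proof (induction j)
  case 0
  then show ?case using Beta_real_pos'[OF assms] by simp
next
  case (Suc j)
  have x: "p + real j > 0" using assms by simp
  have e: "(p + real j + q) * Beta (p + real j + 1) q = (p + real j) * Beta (p + real j) q"
    by (rule Beta_plus1_left[OF pos_not_nonpos_Int[OF x]])
  have pos: "p + real j + q > 0" using assms by simp
  have "Beta (p + real (Suc j)) q = (p + real j) / (p + q + real j) * Beta (p + real j) q"
    using e pos by (simp add: field_simps add_ac)
  hence "Beta (p + real (Suc j)) q / Beta p q = (p + real j) / (p + q + real j) * (Beta (p + real j) q / Beta p q)"
    by simp
  then show ?case using Suc by (simp add: mult.commute)
qed

lemma Beta_ratio_right:
  assumes "p > 0" "q > 0"
  shows "Beta p (q + real k) / Beta p q = (\<Prod>i<k. (q + real i) / (p + q + real i))"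
  using Beta_ratio_left[OF assms(2,1), of k] by (simp add: Beta_commute add.commute)

lemma exp_half_le2: "exp (1/2::real) \<le> 2"
proof -
  have "exp (1/2::real) * exp (1/2) = exp 1" by (simp flip: exp_add)
  also have "\<dots> \<le> 3" by (rule exp_le)
  finally have "exp (1/2::real) ^ 2 \<le> 2 ^ 2" by (simp add: power2_eq_square)
  thus ?thesis by (rule power2_le_imp_le) simp
qed

lemma c_lower:
  fixes \<delta> :: real assumes "\<delta> > 0"
  shows "- (\<delta>^2 / (4 * (1 + \<delta>))) \<le> ln (1 + \<delta> / (3 + 2 * \<delta>)) - \<delta> / (3 + 2 * \<delta>)"
proof -
  define t where "t = \<delta> / (3 + 2 * \<delta>)"
  have t0: "0 \<le> t" and t1: "t \<le> 1" using assms by (auto simp: t_def field_simps)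
  have "t - t^2 \<le> ln (1 + t)" by (rule ln_one_plus_pos_lower_bound[OF t0 t1])
  moreover have "t^2 \<le> \<delta>^2 / (4 * (1 + \<delta>))"
  proof -
    have "t^2 = \<delta>^2 / (3 + 2*\<delta>)^2" by (simp add: t_def power_divide)
    also have "\<dots> \<le> \<delta>^2 / (4 * (1 + \<delta>))"
    proof (rule divide_left_mono)
      show "4 * (1 + \<delta>) \<le> (3 + 2 * \<delta>)\<^sup>2" using assms by (simp add: power2_eq_square algebra_simps)
      show "0 \<le> \<delta>\<^sup>2" by simp
      show "0 < (3 + 2 * \<delta>)\<^sup>2 * (4 * (1 + \<delta>))" using assms by (intro mult_pos_pos) auto
    qed
    finally show ?thesis .
  qed
  ultimately show ?thesis unfolding t_def[symmetric] by linarith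
qed

lemma tail_real:
  fixes p q \<delta> :: real
  assumes p: "p > 0" and q: "q > 0" and d: "\<delta> > 0"
  defines "k \<equiv> nat \<lfloor>(p + q) * \<delta> / 2\<rfloor>"
  shows "(\<Prod>i<k. (p + real i) / (p + q + real i)) / (p / (p + q) + \<delta>) ^ k
           \<le> 2 * exp ((ln (1 + \<delta> / (3 + 2 * \<delta>)) - \<delta> / (3 + 2 * \<delta>)) * (p + q))"
proof -
  define n where "n = p + q"
  define m where "m = p / n"
  have n: "n > 0" using p q by (simp add: n_def)
  have m0: "m > 0" and m1: "m \<le> 1" using p q by (auto simp: m_def n_def)
  have x0: "n * \<delta> / 2 \<ge> 0" using n d by simp
  have fl0: "\<lfloor>n * \<delta> / 2\<rfloor> \<ge> 0" using x0 by simp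
  have kk: "real k = of_int \<lfloor>n * \<delta> / 2\<rfloor>" unfolding k_def n_def[symmetric]
    using fl0 by (simp add: of_nat_nat)
  have kle: "real k \<le> n * \<delta> / 2" unfolding kk by (rule of_int_floor_le)
  have kge: "real k \<ge> n * \<delta> / 2 - 1" unfolding kk by linarith
  have fac: "(p + real i) / (n + real i) \<le> m + \<delta> / 2" if "i < k" for i
  proof -
    have "(p + real i) / (n + real i) \<le> (p + real i) / n"
      using n p by (intro divide_left_mono) auto
    also have "\<dots> = p / n + real i / n" by (simp add: add_divide_distrib)
    finally have "(p + real i) / (n + real i) \<le> p / n + real i / n" .
    also have "real i / n \<le> \<delta> / 2"
      using that kle n by (simp add: field_simps)
    finally show ?thesis unfolding m_def by simp
  qed
  have "(\<Prod>i<k. (p + real i) / (n + real i)) \<le> (\<Prod>i<k. m + \<delta> / 2)"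
    by (intro prod_mono) (use fac n p in auto)
  also have "\<dots> = (m + \<delta>/2) ^ k" by simp
  finally have P: "(\<Prod>i<k. (p + real i) / (n + real i)) \<le> (m + \<delta>/2) ^ k" .
  define a where "a = \<delta> / (2 * (1 + \<delta>))"
  have a0: "a \<ge> 0" and a1: "a \<le> 1/2" using d by (auto simp: a_def field_simps)
  define r where "r = (m + \<delta>/2) / (m + \<delta>)"
  have r0: "r \<ge> 0" using m0 d by (simp add: r_def)
  have "r = 1 - (\<delta>/2) / (m + \<delta>)" using m0 d by (simp add: r_def field_simps)
  also have "\<dots> \<le> 1 - a" unfolding a_def using m0 m1 d
    by (simp add: field_simps)
  also have "\<dots> \<le> exp (- a)" using exp_ge_add_one_self[of "-a"] by simp
  finally have r: "r \<le> exp (- a)" .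
  have "(\<Prod>i<k. (p + real i) / (n + real i)) / (m + \<delta>) ^ k \<le> (m + \<delta>/2) ^ k / (m + \<delta>) ^ k"
    using P m0 d by (intro divide_right_mono) auto
  also have "\<dots> = r ^ k" by (simp add: r_def power_divide)
  also have "\<dots> \<le> exp (- a) ^ k" using r r0 by (intro power_mono) auto
  also have "\<dots> = exp (- a * real k)" by (simp flip: exp_of_nat_mult add: mult.commute)
  also have "\<dots> \<le> exp (- a * (n * \<delta> / 2 - 1))" using kge a0 by (intro exp_mono) (simp add: mult_left_mono)
  also have "\<dots> = exp a * exp (- (\<delta>^2 / (4 * (1 + \<delta>))) * n)"
  proof -
    have e: "a * (n * \<delta> / 2) = \<delta>^2 / (4 * (1 + \<delta>)) * n"
      unfolding a_def using d by (simp add: power2_eq_square)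
    have "- a * (n * \<delta> / 2 - 1) = a - a * (n * \<delta> / 2)"
      by (simp add: algebra_simps)
    also have "\<dots> = a + (- (\<delta>^2 / (4 * (1 + \<delta>))) * n)"
      unfolding e by simp
    finally have "- a * (n * \<delta> / 2 - 1) = a + (- (\<delta>^2 / (4 * (1 + \<delta>))) * n)" .
    thus ?thesis by (simp only: exp_add[symmetric])
  qed
  also have "\<dots> \<le> 2 * exp ((ln (1 + \<delta> / (3 + 2 * \<delta>)) - \<delta> / (3 + 2 * \<delta>)) * n)"
  proof (intro mult_mono)
    show "exp a \<le> 2" using exp_half_le2 a1 by (meson exp_le_cancel_iff order_trans)
    show "exp (- (\<delta>^2 / (4 * (1 + \<delta>))) * n) \<le> exp ((ln (1 + \<delta> / (3 + 2 * \<delta>)) - \<delta> / (3 + 2 * \<delta>)) * n)"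
      using c_lower[OF d] n by (intro exp_mono mult_right_mono) auto
  qed auto
  finally show ?thesis unfolding m_def n_def .
qed

lemma tail_meas:
  fixes M :: "'a measure" and Z :: "'a \<Rightarrow> real"
  assumes D: "distributed M lborel Z (\<lambda>x. ennreal (beta_density p q x))"
    and p: "p > 0" and q: "q > 0" and y0: "y0 > 0"
    and hm: "h \<in> borel_measurable borel"
    and hpos: "\<And>x. 0 < x \<Longrightarrow> x < 1 \<Longrightarrow> h x \<ge> 0"
    and I: "integrable lborel (\<lambda>x. beta_density p q x * h x ^ k)"
    and I0: "integrable lborel (\<lambda>x. beta_density p q x)"
  shows "measure M {\<omega> \<in> space M. y0 \<le> h (Z \<omega>)} \<le> (\<integral>x. beta_density p q x * h x ^ k \<partial>lborel) / y0 ^ k"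
proof -
  let ?f = "beta_density p q"
  let ?S = "{y. y0 \<le> h y}"
  have Ssets: "?S \<in> sets lborel" using hm by measurable
  have "measure M {\<omega> \<in> space M. y0 \<le> h (Z \<omega>)} = (\<integral>\<omega>. indicator ?S (Z \<omega>) \<partial>M)"
  proof -
    have "(\<lambda>\<omega>. indicator ?S (Z \<omega>) :: real) = indicator (Z -` ?S)"
      by (auto simp: indicator_def fun_eq_iff)
    moreover have "Z -` ?S \<inter> space M = {\<omega> \<in> space M. y0 \<le> h (Z \<omega>)}" by auto
    ultimately show ?thesis by simp
  qed
  also have "\<dots> = (\<integral>x. ?f x * indicator ?S x \<partial>lborel)"
    by (rule distributed_integral[OF D, symmetric]) (use Ssets beta_density_nonneg[OF p q] in auto)
  also have "\<dots> \<le> (\<integral>x. ?f x * (h x ^ k / y0 ^ k) \<partial>lborel)"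
  proof (rule integral_mono)
    show "integrable lborel (\<lambda>x. ?f x * indicator ?S x)"
      using integrable_mult_indicator[OF Ssets I0] by (simp add: mult.commute)
    show "integrable lborel (\<lambda>x. ?f x * (h x ^ k / y0 ^ k))"
      using integrable_divide[OF I, of "y0 ^ k"] by (simp add: mult.commute)
    fix x :: real
    show "?f x * indicator ?S x \<le> ?f x * (h x ^ k / y0 ^ k)"
    proof (cases "0 < x \<and> x < 1")
      case False
      hence "?f x = 0" unfolding beta_density_def by (auto simp: indicator_def)
      thus ?thesis by simp
    next
      case True
      have h0: "h x \<ge> 0" using True hpos by auto
      have "indicator ?S x \<le> h x ^ k / y0 ^ k"
      proof (cases "y0 \<le> h x")
        case True
        have "1 \<le> (h x / y0) ^ k" using True y0 by (intro one_le_power) (simp add: field_simps)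
        thus ?thesis using True by (simp add: power_divide)
      next
        case False
        thus ?thesis using h0 y0 by simp
      qed
      thus ?thesis using beta_density_nonneg[OF p q, of x] by (rule mult_left_mono)
    qed
  qed
  also have "\<dots> = (\<integral>x. ?f x * h x ^ k \<partial>lborel) / y0 ^ k"
    by (simp add: mult.commute)
  finally show ?thesis .
qed

theorem lemmaA1:
  fixes M :: "'a measure" and Z :: "'a \<Rightarrow> real" and p q \<delta> :: real
  assumes "prob_space M"
    and "p > 0" and "q > 0"
    and "distributed M lborel Z (\<lambda>x. ennreal (beta_density p q x))"
    and "\<delta> > 0"
  shows "measure M {\<omega> \<in> space M. \<bar>Z \<omega> - (\<integral>\<omega>'. Z \<omega>' \<partial>M)\<bar> > \<delta>}
           \<le> 4 * exp ((ln (1 + \<delta> / (3 + 2 * \<delta>)) - \<delta> / (3 + 2 * \<delta>)) * (p + q))"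
proof -
  interpret prob_space M by fact
  note p = \<open>p > 0\<close> and q = \<open>q > 0\<close> and D = \<open>distributed M lborel Z _\<close> and d = \<open>\<delta> > 0\<close>
  define n where "n = p + q"
  define E where "E = 2 * exp ((ln (1 + \<delta> / (3 + 2 * \<delta>)) - \<delta> / (3 + 2 * \<delta>)) * (p + q))"
  have n: "n > 0" using p q by (simp add: n_def)
  have pn: "p / n + \<delta> > 0" using p n d by (simp add: add_pos_pos)
  have qn': "q / n + \<delta> > 0" using q n d by (simp add: add_pos_pos)
  have Zm[measurable]: "Z \<in> borel_measurable M" using distributed_measurable[OF D] by simp
  have mean: "(\<integral>\<omega>. Z \<omega> \<partial>M) = p / n"
  proof -
    have "(\<integral>\<omega>. Z \<omega> \<partial>M) = (\<integral>x. beta_density p q x * x \<partial>lborel)"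
      by (rule distributed_integral[OF D, symmetric]) (use beta_density_nonneg[OF p q] in auto)
    also have "\<dots> = Beta (p + real 1) (q + real 0) / Beta p q"
      using beta_moment(2)[OF p q, of 1 0] by simp
    also have "\<dots> = p / n" using Beta_ratio_left[OF p q, of 1] by (simp add: n_def)
    finally show ?thesis .
  qed
  have I0: "integrable lborel (\<lambda>x. beta_density p q x)"
    using beta_moment(1)[OF p q, of 0 0] by simp
  define k where "k = nat \<lfloor>(p + q) * \<delta> / 2\<rfloor>"
  define k' where "k' = nat \<lfloor>(q + p) * \<delta> / 2\<rfloor>"
  define A where "A = {\<omega> \<in> space M. p / n + \<delta> \<le> Z \<omega>}"
  define B where "B = {\<omega> \<in> space M. q / n + \<delta> \<le> 1 - Z \<omega>}"
  have As: "A \<in> sets M" unfolding A_def by measurable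
  have Bs: "B \<in> sets M" unfolding B_def by measurable
  have mA: "measure M A \<le> E"
  proof -
    have "measure M A \<le> (\<integral>x. beta_density p q x * x ^ k \<partial>lborel) / (p / n + \<delta>) ^ k"
      unfolding A_def
      by (rule tail_meas[OF D p q, where h="\<lambda>x. x"]) (use p q d pn beta_moment(1)[OF p q, of k 0] I0 in auto)
    also have "(\<integral>x. beta_density p q x * x ^ k \<partial>lborel) = (\<Prod>i<k. (p + real i) / (p + q + real i))"
      using beta_moment(2)[OF p q, of k 0] Beta_ratio_left[OF p q, of k] by simp
    also have "(\<Prod>i<k. (p + real i) / (p + q + real i)) / (p / n + \<delta>) ^ k \<le> E"
      unfolding E_def n_def k_def by (rule tail_real[OF p q d])
    finally show ?thesis .
  qed
  have mB: "measure M B \<le> E"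
  proof -
    have "measure M B \<le> (\<integral>x. beta_density p q x * (1 - x) ^ k' \<partial>lborel) / (q / n + \<delta>) ^ k'"
      unfolding B_def
      by (rule tail_meas[OF D p q, where h="\<lambda>x. 1 - x"]) (use p q d qn' beta_moment(1)[OF p q, of 0 k'] I0 in auto)
    also have "(\<integral>x. beta_density p q x * (1 - x) ^ k' \<partial>lborel) = (\<Prod>i<k'. (q + real i) / (q + p + real i))"
      using beta_moment(2)[OF p q, of 0 k'] Beta_ratio_right[OF p q, of k'] by (simp add: add.commute add.left_commute)
    also have "(\<Prod>i<k'. (q + real i) / (q + p + real i)) / (q / n + \<delta>) ^ k' \<le> E"
      using tail_real[OF q p d] unfolding E_def n_def k'_def by (simp only: add.commute[of q p])
    finally show ?thesis .
  qed
  have sub: "{\<omega> \<in> space M. \<bar>Z \<omega> - (\<integral>\<omega>'. Z \<omega>' \<partial>M)\<bar> > \<delta>} \<subseteq> A \<union> B"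
  proof
    fix \<omega> assume "\<omega> \<in> {\<omega> \<in> space M. \<bar>Z \<omega> - (\<integral>\<omega>'. Z \<omega>' \<partial>M)\<bar> > \<delta>}"
    hence w: "\<omega> \<in> space M" "\<bar>Z \<omega> - p / n\<bar> > \<delta>" unfolding mean by auto
    have qn: "q / n = 1 - p / n" using n by (simp add: n_def field_simps)
    show "\<omega> \<in> A \<union> B" using w unfolding A_def B_def qn by auto
  qed
  have "measure M {\<omega> \<in> space M. \<bar>Z \<omega> - (\<integral>\<omega>'. Z \<omega>' \<partial>M)\<bar> > \<delta>} \<le> measure M (A \<union> B)"
    by (rule finite_measure_mono[OF sub]) (use As Bs in auto)
  also have "\<dots> \<le> measure M A + measure M B" by (rule measure_Un_le[OF As Bs])
  also have "\<dots> \<le> E + E" using mA mB by simp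
  finally show ?thesis unfolding E_def by simp
qed

end
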